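(* Let $\boldsymbol\mu\in\mathcal{P}(\Phi)$ and suppose $k=\|\boldsymbol\mu\|+\ell(\boldsymbol\mu^e)\le n$. Then the centralizer $\mathcal A_{\boldsymbol\mu^{\uparrow n}}$ of $J_{\boldsymbol\mu^{\uparrow n}}$ in $G_n$ has cardinality $$|\mathcal A_{\boldsymbol\mu^{\uparrow k}}|\cdot|G_{n-k}|\cdot\big|\{B\in M_{k\times(n-k)}(\mathbb F_q)\mid J_{\boldsymbol\mu^{\uparrow k}}B=B\}\big|\cdot\big|\{C\in M_{(n-k)\times k}(\mathbb F_q)\mid CJ_{\boldsymbol\mu^{\uparrow k}}=C\}\big|,$$ where $\mathcal A_{\boldsymbol\mu^{\uparrow k}}$ is the centralizer of $J_{\boldsymbol\mu^{\uparrow k}}$ in $G_k$.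
   Context: $q$ is a prime power, $G_n=GL_n(\mathbb F_q)$, $M_{a\times b}(\mathbb F_q)$ the $a\times b$ matrices. $\Phi$ is the set of monic irreducible polynomials in $\mathbb F_q[t]$ other than $t$, $d(f)$ the degree of $f$; $\mathcal{P}(\Phi)$ is the set of finitely supported maps $\boldsymbol\lambda$ from $\Phi$ to partitions, $\|\boldsymbol\lambda\|=\sum_f d(f)|\boldsymbol\lambda(f)|$, $\boldsymbol\lambda^e=\boldsymbol\lambda(t-1)$, $\ell$ = number of nonzero parts. For $f=t^d-\sum_{i=1}^d a_it^{i-1}\in\Phi$, $J(f)$ is the $d\times d$ companion matrix with $1$'s on the superdiagonal, last row $(a_1,\dots,a_d)$, zeros elsewhere; $J_m(f)$ is the $dm\times dm$ block upper triangular matrix with $m$ diagonal blocks $J(f)$ and blocks $I_d$ on the block superdiagonal. $J_{\boldsymbol\lambda}$ is the block diagonal matrix with blocks $J_{\boldsymbol\lambda_i(f)}(f)$ over all $f,i$, blocks for $f\ne t-1$ first, then those for $t-1$ in nonincreasing size. For $r=\ell(\boldsymbol\mu^e)$ and $n\ge\|\boldsymbol\mu\|+r$, $\boldsymbol\mu^{\uparrow n}$ agrees with $\boldsymbol\mu$ off $t-1$ and $\boldsymbol\mu^{\uparrow n}(t-1)=(\boldsymbol\mu^e_1+1,\dots,\boldsymbol\mu^e_r+1,1,\dots,1)$ with $n-r-\|\boldsymbol\mu\|$ trailing ones. *)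

theory Defs
  imports "Jordan_Normal_Form.Matrix" "HOL-Computational_Algebra.Polynomial_Factorial"
begin

definition Phi :: "'a::field poly set" where
  "Phi = {f. lead_coeff f = 1 \<and> irreducible f \<and> f \<noteq> [:0, 1:]}"

definition is_partition :: "nat list \<Rightarrow> bool" where
  "is_partition xs \<longleftrightarrow> sorted (rev xs) \<and> (\<forall>x\<in>set xs. 0 < x)"

definition supp_part :: "('a::field poly \<Rightarrow> nat list) \<Rightarrow> 'a poly set" where
  "supp_part mu = {f. mu f \<noteq> []}"

definition in_P_Phi :: "('a::field poly \<Rightarrow> nat list) \<Rightarrow> bool" where
  "in_P_Phi mu \<longleftrightarrow> finite (supp_part mu) \<and> supp_part mu \<subseteq> Phi \<and> (\<forall>f. is_partition (mu f))"

definition tm1 :: "'a::field poly" where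
  "tm1 = [:-1, 1:]"

definition size_part :: "('a::field poly \<Rightarrow> nat list) \<Rightarrow> nat" where
  "size_part mu = (\<Sum>f\<in>supp_part mu. degree f * sum_list (mu f))"

definition mu_e :: "('a::field poly \<Rightarrow> nat list) \<Rightarrow> nat list" where
  "mu_e mu = mu tm1"

definition mu_up :: "('a::field poly \<Rightarrow> nat list) \<Rightarrow> nat \<Rightarrow> ('a poly \<Rightarrow> nat list)" where
  "mu_up mu n = (\<lambda>f. if f = tm1
      then map Suc (mu_e mu) @ replicate (n - length (mu_e mu) - size_part mu) 1
      else mu f)"

text \<open>Companion matrix J(f) for f = t^d - sum a_i t^(i-1): ones on the superdiagonal,
  last row (a_1,...,a_d), i.e. a_i = - coeff f (i-1).\<close>
definition companion :: "'a::field poly \<Rightarrow> 'a mat" where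
  "companion f = (let d = degree f in
     mat d d (\<lambda>(i, j). if i = d - 1 then - coeff f j else if j = i + 1 then 1 else 0))"

text \<open>J_m(f): block upper triangular, m diagonal blocks J(f), identity blocks on the block superdiagonal.\<close>
definition jordan_block_f :: "'a::field poly \<Rightarrow> nat \<Rightarrow> 'a mat" where
  "jordan_block_f f m = (let d = degree f in
     mat (d * m) (d * m) (\<lambda>(i, j).
       if i div d = j div d then companion f $$ (i mod d, j mod d)
       else if j div d = i div d + 1 then (if i mod d = j mod d then 1 else 0)
       else 0))"

text \<open>J_lambda: blocks for f \<noteq> t-1 first (polynomials taken in the order of the list fs,
  parts of each partition in the listed, nonincreasing order), then the blocks for t-1
  in nonincreasing size.\<close>
definition J_mat :: "'a::field poly list \<Rightarrow> ('a poly \<Rightarrow> nat list) \<Rightarrow> 'a mat" where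
  "J_mat fs mu = diag_block_mat
     (concat (map (\<lambda>f. map (jordan_block_f f) (mu f)) fs)
      @ map (jordan_block_f tm1) (mu tm1))"

definition GL :: "nat \<Rightarrow> 'a::field mat set" where
  "GL n = {A \<in> carrier_mat n n. invertible_mat A}"

definition centralizer_GL :: "nat \<Rightarrow> 'a::field mat \<Rightarrow> 'a mat set" where
  "centralizer_GL n J = {A \<in> GL n. A * J = J * A}"

end

theory Submission
  imports Defs "Jordan_Normal_Form.Determinant"
begin

lemma invertible_iff_det:
  fixes A :: "'a::field mat"
  assumes A: "A \<in> carrier_mat n n"
  shows "invertible_mat A \<longleftrightarrow> det A \<noteq> 0"
proof
  assume "invertible_mat A"
  then obtain B where AB: "A * B = 1\<^sub>m n" and BA: "B * A = 1\<^sub>m (dim_row B)"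
    using A unfolding invertible_mat_def inverts_mat_def by auto
  have "dim_col B = n" using AB A by (metis index_mult_mat(3) index_one_mat(3))
  moreover have "dim_row B = n" using BA A by (metis index_mult_mat(3) index_one_mat(3) carrier_matD(2))
  ultimately have B: "B \<in> carrier_mat n n" by auto
  from arg_cong[OF AB, of det] det_mult[OF A B] show "det A \<noteq> 0" by auto
next
  assume "det A \<noteq> 0"
  from det_non_zero_imp_unit[OF A this, of undefined]
  obtain B where B: "B \<in> carrier_mat n n" and "A * B = 1\<^sub>m n" "B * A = 1\<^sub>m n"
    unfolding Units_def ring_mat_def by auto
  thus "invertible_mat A" using A B unfolding invertible_mat_def inverts_mat_def square_mat.simps
    by auto
qed

lemma zero_mat_mult_vec[simp]: "v \<in> carrier_vec m \<Longrightarrow> 0\<^sub>m n m *\<^sub>v v = (0\<^sub>v n :: 'a::semiring_0 vec)"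
  by (intro eq_vecI) (auto simp: scalar_prod_def)

definition good :: "nat \<Rightarrow> 'a::comm_ring_1 mat \<Rightarrow> bool" where
  "good k J \<longleftrightarrow> J \<in> carrier_mat k k \<and> (\<forall>b c. b \<in> carrier_vec k \<longrightarrow> c \<in> carrier_vec k \<longrightarrow>
      J *\<^sub>v b = b \<longrightarrow> transpose_mat J *\<^sub>v c = c \<longrightarrow> c \<bullet> b = 0)"

lemma good_fixfree:
  assumes "J \<in> carrier_mat k k" "\<And>b. b \<in> carrier_vec k \<Longrightarrow> J *\<^sub>v b = b \<Longrightarrow> b = 0\<^sub>v k"
  shows "good k J"
  unfolding good_def
proof (intro conjI allI impI)
  fix b c :: "'a vec" assume "b \<in> carrier_vec k" "c \<in> carrier_vec k" "J *\<^sub>v b = b"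
  hence "b = 0\<^sub>v k" using assms by auto
  thus "c \<bullet> b = 0" using \<open>c \<in> carrier_vec k\<close> by simp
qed (use assms in auto)

lemma good_four:
  assumes gA: "good k1 A" and gD: "good k2 D"
  shows "good (k1 + k2) (four_block_mat A (0\<^sub>m k1 k2) (0\<^sub>m k2 k1) D)"
proof -
  have A: "A \<in> carrier_mat k1 k1" and D: "D \<in> carrier_mat k2 k2" using gA gD good_def by auto
  let ?M = "four_block_mat A (0\<^sub>m k1 k2) (0\<^sub>m k2 k1) D"
  show ?thesis unfolding good_def
  proof (intro conjI allI impI)
    show "?M \<in> carrier_mat (k1 + k2) (k1 + k2)" using A D by auto
    fix b c :: "'a vec"
    assume b: "b \<in> carrier_vec (k1 + k2)" and c: "c \<in> carrier_vec (k1 + k2)"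
      and fb: "?M *\<^sub>v b = b" and fc: "transpose_mat ?M *\<^sub>v c = c"
    define b1 where "b1 = vec_first b k1"
    define b2 where "b2 = vec_last b k2"
    define c1 where "c1 = vec_first c k1"
    define c2 where "c2 = vec_last c k2"
    have bb: "b = b1 @\<^sub>v b2" using b b1_def b2_def by simp
    have cc: "c = c1 @\<^sub>v c2" using c c1_def c2_def by simp
    have cb: "b1 \<in> carrier_vec k1" "b2 \<in> carrier_vec k2" "c1 \<in> carrier_vec k1" "c2 \<in> carrier_vec k2"
      by (auto simp: b1_def b2_def c1_def c2_def)
    have "?M *\<^sub>v b = (A *\<^sub>v b1) @\<^sub>v (D *\<^sub>v b2)"
      unfolding bb using four_block_mat_mult_vec[OF A _ _ D cb(1,2)] A D cb by simp
    with fb bb have "A *\<^sub>v b1 = b1" "D *\<^sub>v b2 = b2" using A cb by (auto)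
    have "transpose_mat ?M = four_block_mat (transpose_mat A) (0\<^sub>m k1 k2) (0\<^sub>m k2 k1) (transpose_mat D)"
      using transpose_four_block_mat[OF A _ _ D] by simp
    hence "transpose_mat ?M *\<^sub>v c = (transpose_mat A *\<^sub>v c1) @\<^sub>v (transpose_mat D *\<^sub>v c2)"
      unfolding cc using four_block_mat_mult_vec[of "transpose_mat A" k1 k1 _ k2 _ k2 "transpose_mat D" c1 c2] A D cb by simp
    with fc cc have "transpose_mat A *\<^sub>v c1 = c1" "transpose_mat D *\<^sub>v c2 = c2" using A cb by auto
    have "c \<bullet> b = c1 \<bullet> b1 + c2 \<bullet> b2" unfolding bb cc by (rule scalar_prod_append[OF cb(3,4,1,2)])
    thus "c \<bullet> b = 0" using gA gD cb \<open>A *\<^sub>v b1 = b1\<close> \<open>D *\<^sub>v b2 = b2\<close> \<open>transpose_mat A *\<^sub>v c1 = c1\<close>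
      \<open>transpose_mat D *\<^sub>v c2 = c2\<close> unfolding good_def by auto
  qed
qed

lemma good_diag:
  assumes "\<And>A. A \<in> set As \<Longrightarrow> good (dim_row A) A"
  shows "good (sum_list (map dim_row As)) (diag_block_mat As)"
  using assms
proof (induction As)
  case Nil
  then show ?case unfolding good_def by (auto simp: scalar_prod_def)
next
  case (Cons A As)
  have gA: "good (dim_row A) A" using Cons by auto
  hence "dim_col A = dim_row A" unfolding good_def by auto
  have gB: "good (sum_list (map dim_row As)) (diag_block_mat As)" using Cons by auto
  hence "dim_col (diag_block_mat As) = sum_list (map dim_row As)" "dim_row (diag_block_mat As) = sum_list (map dim_row As)"
    unfolding good_def by auto
  then show ?case using good_four[OF gA gB] \<open>dim_col A = dim_row A\<close> by (simp add: Let_def)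
qed

lemma split_four:
  assumes "A \<in> carrier_mat nr1 nc1" "B \<in> carrier_mat nr1 nc2" "C \<in> carrier_mat nr2 nc1" "D \<in> carrier_mat nr2 nc2"
  shows "split_block (four_block_mat A B C D) nr1 nc1 = (A, B, C, D)"
  unfolding split_block_def Let_def using assms
  by (auto intro!: eq_matI)

lemma four_eq_iff:
  assumes "A \<in> carrier_mat nr1 nc1" "B \<in> carrier_mat nr1 nc2" "C \<in> carrier_mat nr2 nc1" "D \<in> carrier_mat nr2 nc2"
  and "A' \<in> carrier_mat nr1 nc1" "B' \<in> carrier_mat nr1 nc2" "C' \<in> carrier_mat nr2 nc1" "D' \<in> carrier_mat nr2 nc2"
  shows "four_block_mat A B C D = four_block_mat A' B' C' D' \<longleftrightarrow> A = A' \<and> B = B' \<and> C = C' \<and> D = D'"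
proof
  assume "four_block_mat A B C D = four_block_mat A' B' C' D'"
  hence "split_block (four_block_mat A B C D) nr1 nc1 = split_block (four_block_mat A' B' C' D') nr1 nc1" by simp
  thus "A = A' \<and> B = B' \<and> C = C' \<and> D = D'"
    unfolding split_four[OF assms(1-4)] split_four[OF assms(5-8)] by simp
qed auto

lemma inv_obtain:
  fixes X :: "'a::field mat"
  assumes "X \<in> carrier_mat n n" "invertible_mat X"
  obtains Y where "Y \<in> carrier_mat n n" "X * Y = 1\<^sub>m n" "Y * X = 1\<^sub>m n"
proof -
  have "det X \<noteq> 0" using invertible_iff_det assms by auto
  from det_non_zero_imp_unit[OF assms(1) this, of undefined]
  show ?thesis using that unfolding Units_def ring_mat_def by auto
qed

lemma CB0:
  fixes J :: "'a::field mat"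
  assumes g: "good k J" and B: "B \<in> carrier_mat k m" and C: "C \<in> carrier_mat m' k"
    and JB: "J * B = B" and CJ: "C * J = C"
  shows "C * B = 0\<^sub>m m' m"
proof (rule eq_matI)
  have J: "J \<in> carrier_mat k k" using g good_def by auto
  fix i j assume i: "i < dim_row (0\<^sub>m m' m :: 'a mat)" and j: "j < dim_col (0\<^sub>m m' m :: 'a mat)"
  have "J *\<^sub>v col B j = col B j" using col_mult2[OF J B, of j] JB j by simp
  moreover have "transpose_mat J *\<^sub>v row C i = row C i"
  proof -
    have "transpose_mat J * transpose_mat C = transpose_mat C"
      using transpose_mult[OF C J] CJ by simp
    hence "col (transpose_mat J * transpose_mat C) i = col (transpose_mat C) i" by simp
    thus ?thesis using col_mult2[of "transpose_mat J" k k "transpose_mat C" m' i] J C i by simp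
  qed
  ultimately have "row C i \<bullet> col B j = 0" using g unfolding good_def using B C i j by auto
  thus "(C * B) $$ (i, j) = 0\<^sub>m m' m $$ (i, j)" using i j B C by simp
qed (use B C in auto)

lemma comm_iff:
  fixes J :: "'a::field mat"
  assumes J: "J \<in> carrier_mat k k" and P: "P \<in> carrier_mat k k" and B: "B \<in> carrier_mat k m"
    and C: "C \<in> carrier_mat m k" and D: "D \<in> carrier_mat m m"
  shows "four_block_mat P B C D * four_block_mat J (0\<^sub>m k m) (0\<^sub>m m k) (1\<^sub>m m)
       = four_block_mat J (0\<^sub>m k m) (0\<^sub>m m k) (1\<^sub>m m) * four_block_mat P B C D
     \<longleftrightarrow> P * J = J * P \<and> J * B = B \<and> C * J = C"
proof -
  have l: "four_block_mat P B C D * four_block_mat J (0\<^sub>m k m) (0\<^sub>m m k) (1\<^sub>m m)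
     = four_block_mat (P * J) B (C * J) D"
    by (subst mult_four_block_mat[OF P B C D J zero_carrier_mat zero_carrier_mat one_carrier_mat])
       (use P B C D J in simp)
  have r: "four_block_mat J (0\<^sub>m k m) (0\<^sub>m m k) (1\<^sub>m m) * four_block_mat P B C D
     = four_block_mat (J * P) (J * B) C D"
    by (subst mult_four_block_mat[OF J zero_carrier_mat zero_carrier_mat one_carrier_mat P B C D])
       (use P B C D J in simp)
  show ?thesis unfolding l r
    by (subst four_eq_iff[of _ k k _ m _ m]) (use P B C D J in auto)
qed

lemma inv_iff:
  fixes J :: "'a::field mat"
  assumes g: "good k J" and P: "P \<in> carrier_mat k k" and B: "B \<in> carrier_mat k m"
    and C: "C \<in> carrier_mat m k" and D: "D \<in> carrier_mat m m"
    and PJ: "P * J = J * P" and JB: "J * B = B" and CJ: "C * J = C"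
  shows "invertible_mat (four_block_mat P B C D) \<longleftrightarrow> invertible_mat P \<and> invertible_mat D"
proof -
  have J: "J \<in> carrier_mat k k" using g good_def by auto
  let ?X = "four_block_mat P B C D"
  let ?A = "four_block_mat J (0\<^sub>m k m) (0\<^sub>m m k) (1\<^sub>m m)"
  have X: "?X \<in> carrier_mat (k+m) (k+m)" using P D by auto
  have A: "?A \<in> carrier_mat (k+m) (k+m)" using J by auto
  have XA: "?X * ?A = ?A * ?X" using comm_iff[OF J P B C D] PJ JB CJ by simp
  show ?thesis
  proof
    assume "invertible_mat ?X"
    then obtain Y where Y: "Y \<in> carrier_mat (k+m) (k+m)" and XY: "?X * Y = 1\<^sub>m (k+m)" and YX: "Y * ?X = 1\<^sub>m (k+m)"
      using inv_obtain X by metis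
    have "Y * ?A = Y * (?A * (?X * Y))" using XY A by (simp add: right_mult_one_mat)
    also have "\<dots> = Y * ((?A * ?X) * Y)" using A X Y by simp
    also have "\<dots> = Y * ((?X * ?A) * Y)" using XA by simp
    also have "\<dots> = Y * (?X * (?A * Y))" using A X Y by (simp only: assoc_mult_mat[OF X A Y])
    also have "\<dots> = (Y * ?X) * (?A * Y)" using assoc_mult_mat[OF Y X mult_carrier_mat[OF A Y]] by simp
    also have "\<dots> = ?A * Y" using YX left_mult_one_mat[OF mult_carrier_mat[OF A Y]] by simp
    finally have YA: "Y * ?A = ?A * Y" .
    obtain P' B' C' D' where sp: "split_block Y k k = (P', B', C', D')" by (cases "split_block Y k k")
    have P': "P' \<in> carrier_mat k k" and B': "B' \<in> carrier_mat k m" and C': "C' \<in> carrier_mat m k"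
      and D': "D' \<in> carrier_mat m m" and Yeq: "Y = four_block_mat P' B' C' D'"
      using split_block[OF sp, of m m] Y by auto
    have c': "P' * J = J * P' \<and> J * B' = B' \<and> C' * J = C'"
      using comm_iff[OF J P' B' C' D'] YA Yeq by simp
    have "?X * Y = four_block_mat (P * P' + B * C') (P * B' + B * D') (C * P' + D * C') (C * B' + D * D')"
      unfolding Yeq by (rule mult_four_block_mat[OF P B C D P' B' C' D'])
    hence "four_block_mat (P * P' + B * C') (P * B' + B * D') (C * P' + D * C') (C * B' + D * D')
       = 1\<^sub>m (k+m)" using XY by simp
    hence "four_block_mat (P * P' + B * C') (P * B' + B * D') (C * P' + D * C') (C * B' + D * D')
       = four_block_mat (1\<^sub>m k) (0\<^sub>m k m) (0\<^sub>m m k) (1\<^sub>m m)" by (simp only: four_block_one_mat)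
    hence "P * P' + B * C' = 1\<^sub>m k \<and> P * B' + B * D' = 0\<^sub>m k m \<and> C * P' + D * C' = 0\<^sub>m m k \<and> C * B' + D * D' = 1\<^sub>m m"
      by (subst (asm) four_eq_iff[of _ k k _ m _ m]) (use P B C D P' B' C' D' in auto)
    hence e1: "P * P' + B * C' = 1\<^sub>m k" and e4: "C * B' + D * D' = 1\<^sub>m m" by auto
    have "C * B' = 0\<^sub>m m m" using CB0[OF g B' C] c' CJ by simp
    hence "D * D' = 1\<^sub>m m" using e4 D D' by simp
    hence "det D * det D' = 1" using det_mult[OF D D'] by simp
    hence invD: "invertible_mat D" using invertible_iff_det[OF D] by auto
    have C'B: "C' * B = 0\<^sub>m m m" using CB0[OF g B C'] c' JB by simp
    define N where "N = B * C'"
    define Q where "Q = P * P'"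
    have N: "N \<in> carrier_mat k k" and Q: "Q \<in> carrier_mat k k" using B C' P P' N_def Q_def by auto
    have NN: "N * N = 0\<^sub>m k k"
    proof -
      have "N * N = B * (C' * (B * C'))" unfolding N_def using assoc_mult_mat[OF B C' mult_carrier_mat[OF B C']] by simp
      also have "\<dots> = B * ((C' * B) * C')" using assoc_mult_mat[OF C' B C'] by simp
      finally have "N * N = B * ((C' * B) * C')" .
      thus ?thesis using C'B B C' by simp
    qed
    have QN1: "Q + N = 1\<^sub>m k" using e1 Q_def N_def by simp
    have "(Q + N) * N = N" using QN1 N by simp
    hence "Q * N + N * N = N" using add_mult_distrib_mat[OF Q N N] by simp
    hence QN: "Q * N = N" using NN Q N by simp
    have "Q * (1\<^sub>m k + N) = Q + Q * N" using mult_add_distrib_mat[OF Q one_carrier_mat N] Q by simp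
    also have "\<dots> = 1\<^sub>m k" using QN QN1 by simp
    finally have "det Q * det (1\<^sub>m k + N) = 1" using det_mult[OF Q, of "1\<^sub>m k + N"] N by simp
    hence "det Q \<noteq> 0" by auto
    hence "det P \<noteq> 0" using det_mult[OF P P'] Q_def by auto
    hence "invertible_mat P" using invertible_iff_det[OF P] by auto
    with invD show "invertible_mat P \<and> invertible_mat D" by simp
  next
    assume "invertible_mat P \<and> invertible_mat D"
    hence iP: "invertible_mat P" and dD: "det D \<noteq> 0" using invertible_iff_det[OF D] by auto
    from inv_obtain[OF P iP] obtain Pi where Pi: "Pi \<in> carrier_mat k k" and PPi: "P * Pi = 1\<^sub>m k"
      and PiP: "Pi * P = 1\<^sub>m k" by metis
    have "Pi * J = Pi * J * (P * Pi)" using PPi Pi J by simp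
    also have "\<dots> = Pi * (J * P) * Pi" using Pi J P by (simp add: assoc_mult_mat[of _ k k _ k _ k])
    also have "\<dots> = Pi * (P * J) * Pi" using PJ by simp
    also have "\<dots> = (Pi * P) * J * Pi" using Pi J P by (simp add: assoc_mult_mat[of _ k k _ k _ k])
    also have "\<dots> = J * Pi" using PiP J Pi by simp
    finally have PiJ: "Pi * J = J * Pi" .
    have "J * (Pi * B) = (J * Pi) * B" using J Pi B by simp
    also have "\<dots> = (Pi * J) * B" using PiJ by simp
    also have "\<dots> = Pi * (J * B)" using assoc_mult_mat[OF Pi J B] by simp
    finally have "J * (Pi * B) = Pi * B" using JB by simp
    hence CPB: "C * (Pi * B) = 0\<^sub>m m m" using CB0[OF g _ C] CJ Pi B by auto
    let ?R = "four_block_mat (1\<^sub>m k) (- (Pi * B)) (0\<^sub>m m k) (1\<^sub>m m)"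
    have PiB: "Pi * B \<in> carrier_mat k m" using Pi B by auto
    have R: "?R \<in> carrier_mat (k+m) (k+m)" by auto
    have "?X * ?R = four_block_mat (P * 1\<^sub>m k + B * 0\<^sub>m m k) (P * (- (Pi * B)) + B * 1\<^sub>m m)
        (C * 1\<^sub>m k + D * 0\<^sub>m m k) (C * (- (Pi * B)) + D * 1\<^sub>m m)"
      by (rule mult_four_block_mat[OF P B C D one_carrier_mat _ zero_carrier_mat one_carrier_mat]) (use PiB in auto)
    also have "P * (- (Pi * B)) = - B" using assoc_mult_mat[OF P Pi B,symmetric] P Pi B PPi by simp
    also have "C * (- (Pi * B)) = 0\<^sub>m m m"
    proof -
      have "C * (- (Pi * B)) = - (0\<^sub>m m m)" using CPB uminus_mult_right_mat[of C "Pi * B"] C Pi B by simp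
      also have "\<dots> = 0\<^sub>m m m" by (intro eq_matI) auto
      finally show ?thesis .
    qed
    finally have XR: "?X * ?R = four_block_mat P (0\<^sub>m k m) C D" using P B C D by simp
    have "det (?X * ?R) = det ?X * det ?R" using det_mult[OF X R] .
    moreover have "det ?R = 1" by (subst det_four_block_mat_lower_left_zero[of _ k _ m]) (use PiB in auto)
    moreover have "det (four_block_mat P (0\<^sub>m k m) C D) = det P * det D"
      by (rule det_four_block_mat_upper_right_zero[OF P refl C D])
    ultimately have "det ?X = det P * det D" using XR by simp
    moreover have "det P \<noteq> 0" using invertible_iff_det[OF P] iP by auto
    ultimately show "invertible_mat ?X" using invertible_iff_det[OF X] dD by auto
  qed
qed

lemma main_count:
  fixes J :: "'a::field mat"
  assumes g: "good k J"
  shows "card (centralizer_GL (k+m) (four_block_mat J (0\<^sub>m k m) (0\<^sub>m m k) (1\<^sub>m m))) =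
     card (centralizer_GL k J) * card (GL m :: 'a mat set) * card {B \<in> carrier_mat k m. J * B = B}
     * card {C \<in> carrier_mat m k. C * J = C}"
proof -
  have J: "J \<in> carrier_mat k k" using g good_def by auto
  let ?A = "four_block_mat J (0\<^sub>m k m) (0\<^sub>m m k) (1\<^sub>m m)"
  let ?SB = "{B \<in> carrier_mat k m. J * B = B}"
  let ?SC = "{C \<in> carrier_mat m k. C * J = C}"
  let ?S = "centralizer_GL k J \<times> ?SB \<times> ?SC \<times> (GL m :: 'a mat set)"
  have mem: "four_block_mat P B C D \<in> centralizer_GL (k+m) ?A \<longleftrightarrow> (P, B, C, D) \<in> ?S"
    if P: "P \<in> carrier_mat k k" and B: "B \<in> carrier_mat k m"
    and C: "C \<in> carrier_mat m k" and D: "D \<in> carrier_mat m m" for P B C D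
  proof -
    have "four_block_mat P B C D \<in> centralizer_GL (k+m) ?A \<longleftrightarrow>
      invertible_mat (four_block_mat P B C D) \<and> (P * J = J * P \<and> J * B = B \<and> C * J = C)"
      unfolding centralizer_GL_def GL_def using comm_iff[OF J P B C D] P D by auto
    also have "\<dots> \<longleftrightarrow> (invertible_mat P \<and> invertible_mat D) \<and> (P * J = J * P \<and> J * B = B \<and> C * J = C)"
      using inv_iff[OF g P B C D] by blast
    also have "\<dots> \<longleftrightarrow> (P, B, C, D) \<in> ?S"
      unfolding centralizer_GL_def GL_def using P B C D by auto
    finally show ?thesis .
  qed
  have "bij_betw (\<lambda>X. split_block X k k) (centralizer_GL (k+m) ?A) ?S"
  proof (rule bij_betw_byWitness[where f' = "\<lambda>(P, B, C, D). four_block_mat P B C D"])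
    show "\<forall>X\<in>centralizer_GL (k+m) ?A. (\<lambda>(P, B, C, D). four_block_mat P B C D) (split_block X k k) = X"
    proof
      fix X assume X: "X \<in> centralizer_GL (k+m) ?A"
      obtain P B C D where sp: "split_block X k k = (P, B, C, D)" by (cases "split_block X k k")
      have "X \<in> carrier_mat (k+m) (k+m)" using X unfolding centralizer_GL_def GL_def by auto
      then show "(\<lambda>(P, B, C, D). four_block_mat P B C D) (split_block X k k) = X"
        using split_block[OF sp, of m m] sp by auto
    qed
    show "\<forall>y\<in>?S. split_block ((\<lambda>(P, B, C, D). four_block_mat P B C D) y) k k = y"
      by (auto simp: centralizer_GL_def GL_def split_four)
    show "(\<lambda>X. split_block X k k) ` centralizer_GL (k+m) ?A \<subseteq> ?S"
    proof
      fix y assume "y \<in> (\<lambda>X. split_block X k k) ` centralizer_GL (k+m) ?A"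
      then obtain X where X: "X \<in> centralizer_GL (k+m) ?A" and y: "y = split_block X k k" by auto
      obtain P B C D where sp: "split_block X k k = (P, B, C, D)" by (cases "split_block X k k")
      have "X \<in> carrier_mat (k+m) (k+m)" using X unfolding centralizer_GL_def GL_def by auto
      hence c: "P \<in> carrier_mat k k" "B \<in> carrier_mat k m" "C \<in> carrier_mat m k" "D \<in> carrier_mat m m"
        and Xe: "X = four_block_mat P B C D" using split_block[OF sp, of m m] by auto
      show "y \<in> ?S" using mem[OF c] X Xe y sp by simp
    qed
    show "(\<lambda>(P, B, C, D). four_block_mat P B C D) ` ?S \<subseteq> centralizer_GL (k+m) ?A"
    proof
      fix X assume "X \<in> (\<lambda>(P, B, C, D). four_block_mat P B C D) ` ?S"
      then obtain P B C D where y: "(P, B, C, D) \<in> ?S" and X: "X = four_block_mat P B C D" by auto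
      have c: "P \<in> carrier_mat k k" "B \<in> carrier_mat k m" "C \<in> carrier_mat m k" "D \<in> carrier_mat m m"
        using y unfolding centralizer_GL_def GL_def by auto
      show "X \<in> centralizer_GL (k+m) ?A" using mem[OF c] y X by simp
    qed
  qed
  hence "card (centralizer_GL (k+m) ?A) = card ?S" by (rule bij_betw_same_card)
  also have "\<dots> = card (centralizer_GL k J) * (card ?SB * (card ?SC * card (GL m :: 'a mat set)))"
    by (simp add: card_cartesian_product)
  finally show ?thesis by (simp add: ac_simps)
qed

lemma tm1_simps: "degree (tm1 :: 'a::field poly) = 1" "coeff (tm1 :: 'a::field poly) 0 = -1"
  unfolding tm1_def by auto

lemma jb_carrier: "jordan_block_f f m \<in> carrier_mat (degree f * m) (degree f * m)"
  unfolding jordan_block_f_def Let_def by auto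

lemma jb_tm1_entry:
  assumes "i < m" "j < m"
  shows "jordan_block_f (tm1 :: 'a::field poly) m $$ (i, j) = (if j = i then 1 else if j = i + 1 then 1 else 0)"
  using assms unfolding jordan_block_f_def companion_def Let_def by (auto simp: tm1_simps)

lemma sum_two_delta:
  fixes x :: "nat \<Rightarrow> 'a::comm_ring_1"
  assumes "i \<noteq> i'" "i < m" "i' < m"
  shows "(\<Sum>j\<in>{0..<m}. (if j = i then 1 else if j = i' then 1 else 0) * x j) = x i + x i'"
proof -
  have "(\<Sum>j\<in>{0..<m}. (if j = i then 1 else if j = i' then 1 else 0) * x j)
      = (\<Sum>j\<in>{0..<m}. (if j = i then x j else 0) + (if j = i' then x j else 0))"
    by (rule sum.cong) (use assms in auto)
  also have "\<dots> = x i + x i'" by (simp add: sum.distrib assms)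
  finally show ?thesis .
qed

lemma good_jb_tm1:
  assumes m: "2 \<le> m"
  shows "good m (jordan_block_f (tm1 :: 'a::field poly) m)"
proof -
  let ?J = "jordan_block_f (tm1 :: 'a poly) m"
  have J: "?J \<in> carrier_mat m m" using jb_carrier[of "tm1::'a poly" m] by (simp add: tm1_simps)
  show ?thesis unfolding good_def
  proof (intro conjI allI impI J)
    fix b c :: "'a vec"
    assume b: "b \<in> carrier_vec m" and c: "c \<in> carrier_vec m" and fb: "?J *\<^sub>v b = b"
      and fc: "transpose_mat ?J *\<^sub>v c = c"
    have b0: "b $ j = 0" if j: "1 \<le> j" "j < m" for j
    proof -
      define i where "i = j - 1"
      have i: "i < m" "j = i + 1" using j i_def by auto
      have "(?J *\<^sub>v b) $ i = (\<Sum>l\<in>{0..<m}. ?J $$ (i, l) * b $ l)"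
        using J b i by (simp add: scalar_prod_def)
      also have "\<dots> = (\<Sum>l\<in>{0..<m}. (if l = i then 1 else if l = j then 1 else 0) * b $ l)"
        by (rule sum.cong) (use i in \<open>auto simp: jb_tm1_entry[where 'a='a]\<close>)
      also have "\<dots> = b $ i + b $ j" by (rule sum_two_delta) (use i j in auto)
      finally show ?thesis using fb by simp
    qed
    have c0: "c $ i = 0" if i: "i + 1 < m" for i
    proof -
      define j where "j = i + 1"
      have "(transpose_mat ?J *\<^sub>v c) $ j = (\<Sum>l\<in>{0..<m}. ?J $$ (l, j) * c $ l)"
        using J c i j_def by (simp add: scalar_prod_def)
      also have "\<dots> = (\<Sum>l\<in>{0..<m}. (if l = j then 1 else if l = i then 1 else 0) * c $ l)"
        by (rule sum.cong) (use i j_def in \<open>auto simp: jb_tm1_entry[where 'a='a]\<close>)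
      also have "\<dots> = c $ j + c $ i" by (rule sum_two_delta) (use i j_def in auto)
      finally show ?thesis using fc by simp
    qed
    have "c \<bullet> b = (\<Sum>l\<in>{0..<m}. c $ l * b $ l)" using b by (simp add: scalar_prod_def)
    also have "\<dots> = 0"
    proof (rule sum.neutral, intro ballI)
      fix l assume "l \<in> {0..<m}"
      then show "c $ l * b $ l = 0" using b0[of l] c0[of l] m by (cases "l = 0") auto
    qed
    finally show "c \<bullet> b = 0" .
  qed
qed

lemma Phi_props:
  fixes f :: "'a::field poly"
  assumes "f \<in> Phi" "f \<noteq> tm1"
  shows "degree f \<ge> 1" "lead_coeff f = 1" "poly f 1 \<noteq> 0"
proof -
  have irr: "irreducible f" and lc: "lead_coeff f = 1" using assms unfolding Phi_def by auto
  show "lead_coeff f = 1" by fact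
  show deg: "degree f \<ge> 1"
  proof (rule ccontr)
    assume "\<not> 1 \<le> degree f"
    hence "degree f = 0" by simp
    hence "f = [:lead_coeff f:]" by (metis degree_0_id)
    hence "f = 1" using lc by (simp add: one_pCons)
    thus False using irr by simp
  qed
  show "poly f 1 \<noteq> 0"
  proof
    assume "poly f 1 = 0"
    hence "tm1 dvd f" unfolding tm1_def using poly_eq_0_iff_dvd by blast
    then obtain g where fg: "f = tm1 * g" by (auto elim: dvdE)
    have "(tm1::'a poly) \<noteq> 0" unfolding tm1_def by simp
    hence "\<not> tm1 dvd (1::'a poly)" using tm1_simps(1)[where 'a='a] is_unit_iff_degree[of "tm1::'a poly"]
      by simp
    hence "g dvd 1" using Factorial_Ring.irreducibleD[OF irr fg] by auto
    then obtain c where gc: "g = [:c:]" using is_unit_poly_iff by blast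
    have "lead_coeff f = lead_coeff (tm1::'a poly) * c" using fg gc by (simp add: lead_coeff_mult)
    moreover have "lead_coeff (tm1::'a poly) = 1" unfolding tm1_def by simp
    ultimately have "c = 1" using lc by simp
    hence "f = tm1" using fg gc by (simp add: one_pCons)
    with assms(2) show False ..
  qed
qed

lemma companion_carrier: "companion f \<in> carrier_mat (degree f) (degree f)"
  unfolding companion_def Let_def by auto

lemma companion_fixfree:
  fixes f :: "'a::field poly"
  assumes d1: "degree f \<ge> 1" and lc: "lead_coeff f = 1" and p1: "poly f 1 \<noteq> 0"
    and b: "b \<in> carrier_vec (degree f)" and fb: "companion f *\<^sub>v b = b"
  shows "b = 0\<^sub>v (degree f)"
proof -
  define d where "d = degree f"
  have C: "companion f \<in> carrier_mat d d" using companion_carrier d_def by auto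
  have entry: "companion f $$ (i, j) = (if i = d - 1 then - coeff f j else if j = i + 1 then 1 else 0)"
    if "i < d" "j < d" for i j using that unfolding companion_def Let_def d_def by auto
  have row: "(companion f *\<^sub>v b) $ i = (\<Sum>j\<in>{0..<d}. companion f $$ (i, j) * b $ j)" if "i < d" for i
    using that C b d_def by (simp add: scalar_prod_def)
  have step: "b $ (i + 1) = b $ i" if i: "i + 1 < d" for i
  proof -
    have "(companion f *\<^sub>v b) $ i = (\<Sum>j\<in>{0..<d}. companion f $$ (i, j) * b $ j)" using row[of i] i by simp
    also have "\<dots> = (\<Sum>j\<in>{0..<d}. (if j = i + 1 then b $ j else 0))"
      using i by (intro sum.cong) (auto simp: entry)
    also have "\<dots> = b $ (i + 1)" using i by simp
    finally show ?thesis using fb i by simp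
  qed
  have const: "b $ i = b $ 0" if "i < d" for i
    using that
  proof (induction i)
    case (Suc i)
    then show ?case using step[of i] by simp
  qed simp
  have "(companion f *\<^sub>v b) $ (d - 1) = (\<Sum>j\<in>{0..<d}. companion f $$ (d - 1, j) * b $ j)"
    using row[of "d - 1"] d1 d_def by simp
  also have "\<dots> = (\<Sum>j\<in>{0..<d}. - coeff f j * b $ 0)"
  proof (rule sum.cong)
    fix j assume "j \<in> {0..<d}"
    hence j: "j < d" by simp
    show "companion f $$ (d - 1, j) * b $ j = - coeff f j * b $ 0"
      using entry[of "d - 1" j] j d1 d_def const[OF j] by simp
  qed simp
  finally have "(companion f *\<^sub>v b) $ (d - 1) = (\<Sum>j\<in>{0..<d}. - coeff f j * b $ 0)" .
  hence "b $ 0 = - (\<Sum>j\<in>{0..<d}. coeff f j) * b $ 0"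
    using fb d1 d_def const[of "d - 1"] by (simp add: sum_distrib_right sum_negf)
  hence "b $ 0 + b $ 0 * (\<Sum>j\<in>{0..<d}. coeff f j) = 0" by (simp add: eq_neg_iff_add_eq_0 mult.commute)
  hence "b $ 0 * (1 + (\<Sum>j\<in>{0..<d}. coeff f j)) = 0" by (simp add: distrib_left)
  moreover have "poly f 1 = 1 + (\<Sum>j\<in>{0..<d}. coeff f j)"
  proof -
    have "poly f 1 = (\<Sum>j\<le>d. coeff f j)" unfolding poly_altdef d_def by simp
    also have "\<dots> = (\<Sum>j\<in>{0..<d}. coeff f j) + coeff f d"
      by (simp add: atLeast0LessThan lessThan_Suc_atMost[symmetric])
    finally show ?thesis using lc d_def by simp
  qed
  ultimately have "b $ 0 = 0" using p1 by simp
  show ?thesis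
  proof (rule eq_vecI)
    fix i assume "i < dim_vec (0\<^sub>v (degree f) :: 'a vec)"
    hence i: "i < d" using d_def by simp
    show "b $ i = 0\<^sub>v (degree f) $ i" using const[OF i] \<open>b $ 0 = 0\<close> i d_def by simp
  qed (use b in simp)
qed

definition Emat :: "nat \<Rightarrow> nat \<Rightarrow> 'a::{zero,one} mat" where
  "Emat d c = mat d c (\<lambda>(i, j). if j = i then 1 else 0)"

lemma jb_rec:
  fixes f :: "'a::field poly"
  assumes d1: "degree f \<ge> 1"
  shows "jordan_block_f f (Suc m) = four_block_mat (companion f) (Emat (degree f) (degree f * m))
           (0\<^sub>m (degree f * m) (degree f)) (jordan_block_f f m)"
proof -
  define d where "d = degree f"
  have d: "d \<ge> 1" using d1 d_def by simp
  have C: "companion f \<in> carrier_mat d d" using companion_carrier d_def by auto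
  have Jm: "jordan_block_f f m \<in> carrier_mat (d * m) (d * m)" using jb_carrier d_def by auto
  have divge: "x div d = Suc ((x - d) div d)" "x mod d = (x - d) mod d" if "x \<ge> d" for x
    using that d by (simp_all add: le_div_geq le_mod_geq)
  have divlt: "x div d = 0" "x mod d = x" if "x < d" for x using that by simp_all
  show ?thesis
  proof (rule eq_matI)
    fix i j assume "i < dim_row (four_block_mat (companion f) (Emat (degree f) (degree f * m))
           (0\<^sub>m (degree f * m) (degree f)) (jordan_block_f f m))"
      and "j < dim_col (four_block_mat (companion f) (Emat (degree f) (degree f * m))
           (0\<^sub>m (degree f * m) (degree f)) (jordan_block_f f m))"
    hence i: "i < d + d * m" and j: "j < d + d * m" using C Jm d_def by auto
    have lhs: "jordan_block_f f (Suc m) $$ (i, j) = (if i div d = j div d then companion f $$ (i mod d, j mod d)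
       else if j div d = i div d + 1 then (if i mod d = j mod d then 1 else 0) else 0)"
      using i j unfolding jordan_block_f_def Let_def d_def by simp
    have rhs: "jordan_block_f f m $$ (i - d, j - d) = (if (i - d) div d = (j - d) div d then companion f $$ ((i - d) mod d, (j - d) mod d)
       else if (j - d) div d = (i - d) div d + 1 then (if (i - d) mod d = (j - d) mod d then 1 else 0) else 0)"
      if "d \<le> i" "d \<le> j"
      using i j that unfolding jordan_block_f_def Let_def d_def by simp
    show "jordan_block_f f (Suc m) $$ (i, j) = four_block_mat (companion f) (Emat (degree f) (degree f * m))
           (0\<^sub>m (degree f * m) (degree f)) (jordan_block_f f m) $$ (i, j)"
    proof (cases "i < d")
      case True
      show ?thesis
      proof (cases "j < d")
        case True
        then show ?thesis using \<open>i < d\<close> lhs C Jm d_def divlt by simp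
      next
        case False
        have "(j - d) div d = 0 \<longleftrightarrow> j - d < d" using d by (simp add: div_eq_0_iff)
        then show ?thesis using \<open>i < d\<close> False lhs C Jm d_def divlt[of i] divge[of j] i j
          by (auto simp: Emat_def)
      qed
    next
      case False
      show ?thesis
      proof (cases "j < d")
        case True
        then show ?thesis using False lhs C Jm d_def divlt[of j] divge[of i] i j by auto
      next
        case False
        then show ?thesis using \<open>\<not> i < d\<close> lhs rhs C Jm d_def divge[of i] divge[of j] i j by auto
      qed
    qed
  qed (use C Jm d_def jb_carrier[of f "Suc m"] in auto)
qed

lemma jb_fixfree:
  fixes f :: "'a::field poly"
  assumes d1: "degree f \<ge> 1" and lc: "lead_coeff f = 1" and p1: "poly f 1 \<noteq> 0"
  shows "b \<in> carrier_vec (degree f * m) \<Longrightarrow> jordan_block_f f m *\<^sub>v b = b \<Longrightarrow> b = 0\<^sub>v (degree f * m)"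
proof (induction m arbitrary: b)
  case 0
  then show ?case by (intro eq_vecI) auto
next
  case (Suc m)
  define d where "d = degree f"
  have C: "companion f \<in> carrier_mat d d" using companion_carrier d_def by auto
  have Jm: "jordan_block_f f m \<in> carrier_mat (d * m) (d * m)" using jb_carrier d_def by auto
  have E: "Emat d (d * m) \<in> carrier_mat d (d * m)" unfolding Emat_def by auto
  have b: "b \<in> carrier_vec (d + d * m)" using Suc.prems d_def by simp
  define b1 where "b1 = vec_first b d"
  define b2 where "b2 = vec_last b (d * m)"
  have bb: "b = b1 @\<^sub>v b2" using b b1_def b2_def by simp
  have b1: "b1 \<in> carrier_vec d" and b2: "b2 \<in> carrier_vec (d * m)" by (auto simp: b1_def b2_def)
  have "jordan_block_f f (Suc m) *\<^sub>v b = (companion f *\<^sub>v b1 + Emat d (d * m) *\<^sub>v b2) @\<^sub>v (jordan_block_f f m *\<^sub>v b2)"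
    unfolding jb_rec[OF d1] bb d_def[symmetric]
    using four_block_mat_mult_vec[OF C E zero_carrier_mat Jm b1 b2] b1 b2 Jm by simp
  hence eq: "(companion f *\<^sub>v b1 + Emat d (d * m) *\<^sub>v b2) @\<^sub>v (jordan_block_f f m *\<^sub>v b2) = b1 @\<^sub>v b2"
    using Suc.prems bb by simp
  have "companion f *\<^sub>v b1 + Emat d (d * m) *\<^sub>v b2 = b1" "jordan_block_f f m *\<^sub>v b2 = b2"
  proof -
    have cv: "companion f *\<^sub>v b1 + Emat d (d * m) *\<^sub>v b2 \<in> carrier_vec d" by (intro add_carrier_vec mult_mat_vec_carrier[OF C b1] mult_mat_vec_carrier[OF E b2])
    show "companion f *\<^sub>v b1 + Emat d (d * m) *\<^sub>v b2 = b1" "jordan_block_f f m *\<^sub>v b2 = b2"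
      using append_vec_eq[OF cv b1] eq by auto
  qed
  hence b20: "b2 = 0\<^sub>v (d * m)" using Suc.IH[of b2] b2 d_def by simp
  have "Emat d (d * m) *\<^sub>v b2 = 0\<^sub>v d" unfolding b20 using E by (intro eq_vecI) (auto simp: scalar_prod_def)
  hence "companion f *\<^sub>v b1 = b1" using \<open>companion f *\<^sub>v b1 + Emat d (d * m) *\<^sub>v b2 = b1\<close> C b1 by simp
  hence b10: "b1 = 0\<^sub>v d" using companion_fixfree[OF d1 lc p1, of b1] b1 d_def by simp
  show ?case unfolding bb b10 b20 d_def[symmetric] by (intro eq_vecI) auto
qed

lemma good_jb_other:
  fixes f :: "'a::field poly"
  assumes "f \<in> Phi" "f \<noteq> tm1"
  shows "good (degree f * m) (jordan_block_f f m)"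
  by (rule good_fixfree[OF jb_carrier jb_fixfree[OF Phi_props[OF assms]]])

lemma jb_tm1_one: "jordan_block_f (tm1 :: 'a::field poly) 1 = 1\<^sub>m 1"
proof -
  have c: "jordan_block_f (tm1 :: 'a poly) 1 \<in> carrier_mat 1 1" using jb_carrier[of "tm1::'a poly" 1] by (simp add: tm1_simps)
  show ?thesis by (rule eq_matI) (use c jb_tm1_entry[where 'a='a and m=1] in auto)
qed

lemma diag_one: "diag_block_mat (replicate j (1\<^sub>m 1 :: 'a::semiring_1 mat)) = 1\<^sub>m j"
proof (induction j)
  case 0
  then show ?case by (intro eq_matI) auto
next
  case (Suc j)
  have "diag_block_mat (replicate (Suc j) (1\<^sub>m 1 :: 'a mat)) = four_block_mat (1\<^sub>m 1) (0\<^sub>m 1 j) (0\<^sub>m j 1) (1\<^sub>m j)"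
    using Suc by (simp add: Let_def)
  also have "\<dots> = 1\<^sub>m (1 + j)" by (rule four_block_one_mat)
  finally show ?case by simp
qed

lemma sum_list_concat': "sum_list (concat xss) = sum_list (map sum_list (xss :: nat list list))"
  by (induction xss) auto

lemma sum_list_Suc: "sum_list (map Suc xs) = sum_list xs + length xs"
  by (induction xs) auto

theorem corollary2p8:
  fixes mu :: "'a::{finite, field} poly \<Rightarrow> nat list"
    and fs :: "'a poly list"
    and n k :: nat
  assumes "in_P_Phi mu"
    and "distinct fs" and "set fs = supp_part mu - {tm1}"
    and "k = size_part mu + length (mu_e mu)"
    and "k \<le> n"
  shows "card (centralizer_GL n (J_mat fs (mu_up mu n))) =
           card (centralizer_GL k (J_mat fs (mu_up mu k)))
         * card (GL (n - k) :: 'a mat set)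
         * card {B \<in> carrier_mat k (n - k). J_mat fs (mu_up mu k) * B = B}
         * card {C \<in> carrier_mat (n - k) k. C * J_mat fs (mu_up mu k) = C}"
proof -
  note P = assms(1) and dist = assms(2) and fsset = assms(3) and kdef = assms(4) and kn = assms(5)
  have fin: "finite (supp_part mu)" and suppPhi: "supp_part mu \<subseteq> Phi" and part: "\<And>f. is_partition (mu f)"
    using P unfolding in_P_Phi_def by auto
  have tm1_notin: "tm1 \<notin> set fs" using fsset by auto
  define Lo where "Lo = concat (map (\<lambda>f. map (jordan_block_f f) (mu f)) fs)"
  define Lt where "Lt = map (jordan_block_f (tm1::'a poly)) (map Suc (mu tm1))"
  have upf: "mu_up mu N f = mu f" if "f \<in> set fs" for f N
    using that tm1_notin unfolding mu_up_def by auto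
  have Lo_eq: "concat (map (\<lambda>f. map (jordan_block_f f) (mu_up mu N f)) fs) = Lo" for N
    unfolding Lo_def by (intro arg_cong[where f = concat] map_cong refl) (simp add: upf)
  have upk: "mu_up mu k tm1 = map Suc (mu tm1)" using kdef unfolding mu_up_def mu_e_def by simp
  have upn: "mu_up mu n tm1 = map Suc (mu tm1) @ replicate (n - k) 1"
    using kdef kn unfolding mu_up_def mu_e_def by simp
  have Jk: "J_mat fs (mu_up mu k) = diag_block_mat (Lo @ Lt)"
    unfolding J_mat_def Lo_eq upk Lt_def by simp
  have Jn: "J_mat fs (mu_up mu n) = diag_block_mat ((Lo @ Lt) @ replicate (n - k) (jordan_block_f tm1 1))"
    unfolding J_mat_def Lo_eq upn Lt_def by simp
  have gl: "good (sum_list (map dim_row (Lo @ Lt))) (diag_block_mat (Lo @ Lt))"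
  proof (rule good_diag)
    fix A assume "A \<in> set (Lo @ Lt)"
    then consider (o) f x where "f \<in> set fs" "x \<in> set (mu f)" "A = jordan_block_f f x"
      | (t) x where "x \<in> set (mu tm1)" "A = jordan_block_f tm1 (Suc x)"
      unfolding Lo_def Lt_def by auto
    then show "good (dim_row A) A"
    proof cases
      case o
      have "f \<in> Phi" "f \<noteq> tm1" using o(1) fsset suppPhi by auto
      then show ?thesis using good_jb_other[of f x] o(3) jb_carrier[of f x] by simp
    next
      case t
      have "x > 0" using part[of tm1] t(1) unfolding is_partition_def by auto
      then show ?thesis using good_jb_tm1[of "Suc x", where 'a='a] t(2) jb_carrier[of "tm1::'a poly" "Suc x"]
        by (simp add: tm1_simps)
    qed
  qed
  have dimLo: "sum_list (map dim_row Lo) = (\<Sum>f\<in>set fs. degree f * sum_list (mu f))"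
  proof -
    have "sum_list (map dim_row Lo) = sum_list (map (\<lambda>f. degree f * sum_list (mu f)) fs)"
      unfolding Lo_def map_concat sum_list_concat' map_map o_def
      by (intro arg_cong[where f = sum_list] map_cong refl)
         (simp add: jb_carrier[THEN carrier_matD(1)] sum_list_const_mult)
    also have "\<dots> = (\<Sum>f\<in>set fs. degree f * sum_list (mu f))" using dist by (simp add: sum_list_distinct_conv_sum_set)
    finally show ?thesis .
  qed
  have dimLt: "sum_list (map dim_row Lt) = sum_list (mu tm1) + length (mu tm1)"
  proof -
    have "sum_list (map dim_row Lt) = sum_list (map Suc (mu tm1))"
      unfolding Lt_def map_map o_def
      by (intro arg_cong[where f = sum_list] map_cong refl)
         (simp add: jb_carrier[THEN carrier_matD(1)] tm1_simps)
    thus ?thesis by (simp add: sum_list_Suc)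
  qed
  have sp: "size_part mu = (\<Sum>f\<in>set fs. degree f * sum_list (mu f)) + sum_list (mu tm1)"
  proof (cases "tm1 \<in> supp_part mu")
    case True
    hence "supp_part mu = insert tm1 (set fs)" using fsset by auto
    then show ?thesis unfolding size_part_def using tm1_notin by (simp add: tm1_simps)
  next
    case False
    hence "supp_part mu = set fs" "mu tm1 = []" using fsset unfolding supp_part_def by auto
    then show ?thesis unfolding size_part_def by simp
  qed
  have dimk: "sum_list (map dim_row (Lo @ Lt)) = k"
    using dimLo dimLt sp kdef unfolding mu_e_def by simp
  have g: "good k (J_mat fs (mu_up mu k))" using gl dimk Jk by simp
  hence Jc: "J_mat fs (mu_up mu k) \<in> carrier_mat k k" unfolding good_def by simp
  have "J_mat fs (mu_up mu n) = four_block_mat (J_mat fs (mu_up mu k)) (0\<^sub>m k (n - k)) (0\<^sub>m (n - k) k) (1\<^sub>m (n - k))"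
  proof -
    have "J_mat fs (mu_up mu n) = (let A = diag_block_mat (Lo @ Lt); B = diag_block_mat (replicate (n - k) (jordan_block_f (tm1::'a poly) 1))
      in four_block_mat A (0\<^sub>m (dim_row A) (dim_col B)) (0\<^sub>m (dim_row B) (dim_col A)) B)"
      unfolding Jn by (rule diag_block_mat_append)
    thus ?thesis unfolding Let_def Jk[symmetric] jb_tm1_one diag_one using Jc by simp
  qed
  hence "card (centralizer_GL n (J_mat fs (mu_up mu n))) =
    card (centralizer_GL (k + (n - k)) (four_block_mat (J_mat fs (mu_up mu k)) (0\<^sub>m k (n - k)) (0\<^sub>m (n - k) k) (1\<^sub>m (n - k))))"
    using kn by simp
  also have "\<dots> = card (centralizer_GL k (J_mat fs (mu_up mu k)))
         * card (GL (n - k) :: 'a mat set)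
         * card {B \<in> carrier_mat k (n - k). J_mat fs (mu_up mu k) * B = B}
         * card {C \<in> carrier_mat (n - k) k. C * J_mat fs (mu_up mu k) = C}"
    by (rule main_count[OF g])
  finally show ?thesis .
qed

end
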